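(* Let $R$ be a commutative ring, $F$ a free $R$-module with basis $e_1,\dots,e_n$, $\varphi:F\to R$ an $R$-linear map, $M$ an $R$-module and $t\ge 0$. Define $\gamma_t:K_{s+t}(\varphi,M)\to K_s(\varphi,K_t(\varphi,M))=\bigwedge^sF\otimes_R K_t(\varphi,M)$ for every $s\ge 0$ by $\gamma_t(f)=\sum_{\#I=s}e_I\otimes b_I$, where $b_I$ is determined by the decomposition $f=a_I+e_I.b_I$. Then $\gamma_t$ is a map of complexes $K(\varphi,M)\to K(\varphi,K_t(\varphi,M))[-t]$, i.e. $\gamma_t$ commutes with the Koszul differentials (the differential on $K(\varphi,K_t(\varphi,M))$ being the Koszul differential of $\varphi$ with coefficients in the module $K_t(\varphi,M)$).
   Context: The Koszul complex is $K(\varphi,N)=\bigwedge^\bullet F\otimes_R N$ for an $R$-module $N$, with $K_t(\varphi,N)=\bigwedge^tF\otimes_R N$ and differential $e_{i_1}\wedge\cdots\wedge e_{i_s}\otimes m\mapsto \sum_{j=1}^s(-1)^{j+1}e_{i_1}\wedge\cdots\widehat{e_{i_j}}\cdots\wedge e_{i_s}\otimes \varphi(e_{i_j})m$. The exterior algebra acts on $K(\varphi,M)$ by left multiplication, written $a.f$. For $I=\{i_1<\dots<i_s\}$, $e_I=e_{i_1}\wedge\cdots\wedge e_{i_s}$. Every $f\in K_r(\varphi,M)$ is uniquely $\sum_{\#J=r}e_J\otimes m_J$; $e_J$ appears in $f$ if $m_J\ne0$. For $f\in K_{s+t}(\varphi,M)$ and $\#I=s$ there is a unique decomposition $f=a_I+e_I.b_I$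 with $a_I\in K_{s+t}(\varphi,M)$, $b_I\in K_t(\varphi,M)$, no $e_J$ with $J\supseteq I$ appearing in $a_I$, and no $e_S$ with $S\cap I\ne\emptyset$ appearing in $b_I$. *)

theory Defs
  imports Main "HOL.Modules" "HOL-Library.Function_Algebras"
begin

text \<open>F is free with basis e_1..e_n
  (indices {1..n}); phi : F -> R is given by its values x i = phi(e_i).
  An element of K_r(phi,N) = wedge^r F (x) N is written uniquely as
  sum over #J = r of e_J (x) m_J; we represent it by its coefficient
  function J |-> m_J (a map nat set => N vanishing outside the r-subsets
  of {1..n}).\<close>

definition in_K :: "nat \<Rightarrow> nat \<Rightarrow> (nat set \<Rightarrow> 'b::zero) \<Rightarrow> bool" where
  "in_K n r f \<longleftrightarrow> (\<forall>J. f J \<noteq> 0 \<longrightarrow> J \<subseteq> {1..n} \<and> card J = r)"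

text \<open>Sign with e_I /\ e_L = wsign I L * e_(I Un L) for disjoint I, L.\<close>
definition wsign :: "nat set \<Rightarrow> nat set \<Rightarrow> 'r::comm_ring_1" where
  "wsign I L = (-1) ^ card {(i,k). i \<in> I \<and> k \<in> L \<and> k < i}"

text \<open>Koszul differential with coefficients in a module (scalar action scale):
  e_{i_1}..e_{i_s} (x) m |-> sum_j (-1)^(j+1) e_{..omit i_j..} (x) phi(e_{i_j}) m,
  written in coordinates: (-1)^(j+1) = (-1)^#{elements of J below i}.\<close>
definition koszul_d :: "('r::comm_ring_1 \<Rightarrow> 'b \<Rightarrow> 'b) \<Rightarrow> nat \<Rightarrow> (nat \<Rightarrow> 'r)
    \<Rightarrow> (nat set \<Rightarrow> 'b::comm_monoid_add) \<Rightarrow> nat set \<Rightarrow> 'b" where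
  "koszul_d scale n x f J =
     (if J \<subseteq> {1..n}
      then (\<Sum>i\<in>{1..n} - J. scale ((-1) ^ card {j\<in>J. j < i} * x i) (f (insert i J)))
      else 0)"

text \<open>Left multiplication by e_I (exterior algebra action): e_I . b.\<close>
definition wedge_act :: "('r::comm_ring_1 \<Rightarrow> 'b \<Rightarrow> 'b) \<Rightarrow> nat set
    \<Rightarrow> (nat set \<Rightarrow> 'b::zero) \<Rightarrow> nat set \<Rightarrow> 'b" where
  "wedge_act scale I b J = (if I \<subseteq> J then scale (wsign I (J - I)) (b (J - I)) else 0)"

text \<open>The component b_I of the unique decomposition f = a_I + e_I . b_I,
  for f in K_(s+t), #I = s.\<close>
definition b_comp :: "('r::comm_ring_1 \<Rightarrow> 'b \<Rightarrow> 'b) \<Rightarrow> nat \<Rightarrow> nat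
    \<Rightarrow> (nat set \<Rightarrow> 'b::ab_group_add) \<Rightarrow> nat set \<Rightarrow> (nat set \<Rightarrow> 'b)" where
  "b_comp scale n t f I = (THE b. in_K n t b \<and> (\<forall>S. S \<inter> I \<noteq> {} \<longrightarrow> b S = 0) \<and>
      (\<exists>a. in_K n (card I + t) a \<and> (\<forall>J. I \<subseteq> J \<longrightarrow> a J = 0) \<and>
           f = (\<lambda>J. a J + wedge_act scale I b J)))"

definition gamma :: "('r::comm_ring_1 \<Rightarrow> 'b \<Rightarrow> 'b) \<Rightarrow> nat \<Rightarrow> nat \<Rightarrow> nat
    \<Rightarrow> (nat set \<Rightarrow> 'b::ab_group_add) \<Rightarrow> nat set \<Rightarrow> (nat set \<Rightarrow> 'b)" where
  "gamma scale n s t f I =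
     (if I \<subseteq> {1..n} \<and> card I = s then b_comp scale n t f I else 0)"

definition scale_K :: "('r \<Rightarrow> 'b \<Rightarrow> 'b) \<Rightarrow> 'r \<Rightarrow> (nat set \<Rightarrow> 'b) \<Rightarrow> nat set \<Rightarrow> 'b" where
  "scale_K scale r g = (\<lambda>J. scale r (g J))"

end

theory Submission
  imports Defs
begin

lemma sum_fun_apply: "(sum g A) L = (\<Sum>i\<in>A. g i L)"
  by (induct A rule: infinite_finite_induct) (simp_all add: zero_fun_def plus_fun_def)

lemma neg1_sq: "((-1::'r::comm_ring_1) ^ k) * (-1) ^ k = 1"
  by (simp flip: power_mult_distrib)

lemma wsign_sq: "(wsign I L :: 'r::comm_ring_1) * wsign I L = 1"
  unfolding wsign_def by (rule neg1_sq)

lemma bcomp_eq: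
  assumes m: "module scale" and fin: "finite I" and g: "in_K n (card I + t) g"
  shows "b_comp scale n t g I =
     (\<lambda>L. if L \<inter> I = {} then scale (wsign I L) (g (I \<union> L)) else 0)"
  (is "_ = ?B")
proof -
  interpret module scale by (rule m)
  have ex: "in_K n t ?B \<and> (\<forall>S. S \<inter> I \<noteq> {} \<longrightarrow> ?B S = 0) \<and>
      (\<exists>a. in_K n (card I + t) a \<and> (\<forall>J. I \<subseteq> J \<longrightarrow> a J = 0) \<and>
           g = (\<lambda>J. a J + wedge_act scale I ?B J))"
  proof (intro conjI allI impI)
    show "in_K n t ?B"
      unfolding in_K_def
    proof (intro allI impI)
      fix L assume h: "?B L \<noteq> 0"
      then have d: "L \<inter> I = {}" and gn: "g (I \<union> L) \<noteq> 0" by (auto split: if_splits)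
      with g have s: "I \<union> L \<subseteq> {1..n}" and c: "card (I \<union> L) = card I + t"
        unfolding in_K_def by blast+
      then have "finite L" using finite_subset by blast
      with c d fin have "card L = t" by (simp add: card_Un_disjoint inf_commute)
      with s show "L \<subseteq> {1..n} \<and> card L = t" by blast
    qed
    fix S assume "S \<inter> I \<noteq> {}" then show "?B S = 0" by simp
  next
    let ?a = "\<lambda>J. if I \<subseteq> J then 0 else g J"
    show "\<exists>a. in_K n (card I + t) a \<and> (\<forall>J. I \<subseteq> J \<longrightarrow> a J = 0) \<and>
           g = (\<lambda>J. a J + wedge_act scale I ?B J)"
    proof (intro exI conjI allI impI)
      show "in_K n (card I + t) ?a" using g unfolding in_K_def by auto
      fix J assume "I \<subseteq> J" then show "?a J = 0" by simp
    next
      show "g = (\<lambda>J. ?a J + wedge_act scale I ?B J)"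
      proof
        fix J
        show "g J = ?a J + wedge_act scale I ?B J"
        proof (cases "I \<subseteq> J")
          case True
          then have "I \<union> (J - I) = J" "(J - I) \<inter> I = {}" by blast+
          then show ?thesis using True
            by (simp add: wedge_act_def wsign_sq)
        qed (simp add: wedge_act_def)
      qed
    qed
  qed
  show ?thesis
    unfolding b_comp_def
  proof (rule the_equality)
    show "in_K n t ?B \<and> (\<forall>S. S \<inter> I \<noteq> {} \<longrightarrow> ?B S = 0) \<and>
      (\<exists>a. in_K n (card I + t) a \<and> (\<forall>J. I \<subseteq> J \<longrightarrow> a J = 0) \<and>
           g = (\<lambda>J. a J + wedge_act scale I ?B J))" by (rule ex)
  next
    fix b assume hb: "in_K n t b \<and> (\<forall>S. S \<inter> I \<noteq> {} \<longrightarrow> b S = 0) \<and>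
      (\<exists>a. in_K n (card I + t) a \<and> (\<forall>J. I \<subseteq> J \<longrightarrow> a J = 0) \<and>
           g = (\<lambda>J. a J + wedge_act scale I b J))"
    then obtain a where a0: "\<forall>J. I \<subseteq> J \<longrightarrow> a J = 0"
      and ge: "g = (\<lambda>J. a J + wedge_act scale I b J)" by blast
    show "b = ?B"
    proof
      fix L
      show "b L = ?B L"
      proof (cases "L \<inter> I = {}")
        case True
        then have "(I \<union> L) - I = L" by blast
        then have "g (I \<union> L) = scale (wsign I L) (b L)"
          using a0 by (subst ge) (simp add: wedge_act_def)
        then show ?thesis using True by (simp add: wsign_sq)
      next
        case False then show ?thesis using hb by simp
      qed
    qed
  qed
qed


lemma wsign_insert:
  assumes "finite J" "finite L" "i \<notin> J"
  shows "(wsign (insert i J) L :: 'r::comm_ring_1) = wsign J L * (-1) ^ card {k\<in>L. k < i}"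
proof -
  let ?P = "\<lambda>J. {(a,k). a \<in> J \<and> k \<in> L \<and> k < a}"
  have eq: "?P (insert i J) = ?P J \<union> Pair i ` {k\<in>L. k < i}" by auto
  have f1: "finite (?P J)" by (rule finite_subset[of _ "J \<times> L"]) (use assms in auto)
  have f2: "finite (Pair i ` {k\<in>L. k < i})" using assms by simp
  have dj: "?P J \<inter> Pair i ` {k\<in>L. k < i} = {}" using assms by auto
  have c2: "card (Pair i ` {k\<in>L. k < i}) = card {k\<in>L. k < i}"
    by (rule card_image) (simp add: inj_on_def)
  show ?thesis unfolding wsign_def eq
    by (simp add: card_Un_disjoint[OF f1 f2 dj] c2 power_add)
qed

lemma dF_in_K:
  assumes m: "module scale" and "in_K n (Suc r) f"
  shows "in_K n r (koszul_d scale n x f)"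
  unfolding in_K_def
proof (intro allI impI)
  fix J assume h: "koszul_d scale n x f J \<noteq> 0"
  then have J: "J \<subseteq> {1..n}" by (auto simp: koszul_d_def split: if_splits)
  with h obtain i where i: "i \<in> {1..n} - J"
    and "scale ((-1) ^ card {j\<in>J. j < i} * x i) (f (insert i J)) \<noteq> 0"
  proof -
    from h J have "(\<Sum>i\<in>{1..n} - J. scale ((-1) ^ card {j\<in>J. j < i} * x i) (f (insert i J))) \<noteq> 0"
      unfolding koszul_d_def by simp
    then show ?thesis using that by (rule sum.not_neutral_contains_not_neutral)
  qed
  then have fi: "f (insert i J) \<noteq> 0" using module.scale_zero_right[OF m] by auto
  with assms have "card (insert i J) = Suc r" unfolding in_K_def by blast
  moreover have "finite J" using J finite_subset by blast
  ultimately have "card J = r" using i by simp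
  with J show "J \<subseteq> {1..n} \<and> card J = r" by blast
qed

theorem lemma2p3:
  fixes scale :: "'r::comm_ring_1 \<Rightarrow> 'm::ab_group_add \<Rightarrow> 'm"
    and n s t :: nat and x :: "nat \<Rightarrow> 'r" and f :: "nat set \<Rightarrow> 'm"
  assumes "module scale"
    and "in_K n (Suc s + t) f"
  shows "koszul_d (scale_K scale) n x (gamma scale n (Suc s) t f)
           = gamma scale n s t (koszul_d scale n x f)"
proof
  interpret module scale by (rule assms(1))
  let ?dF = "koszul_d scale n x f"
  have dF: "in_K n (s + t) ?dF" using dF_in_K[OF assms(1)] assms(2) by simp
  fix J
  show "koszul_d (scale_K scale) n x (gamma scale n (Suc s) t f) J
           = gamma scale n s t ?dF J"
  proof (cases "J \<subseteq> {1..n}")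
    case False
    then show ?thesis by (simp add: koszul_d_def gamma_def)
  next
    case Jn: True
    then have finJ: "finite J" using finite_subset by blast
    show ?thesis
    proof (cases "card J = s")
      case False
      have "gamma scale n (Suc s) t f (insert i J) = 0" if "i \<in> {1..n} - J" for i
        using that False finJ by (simp add: gamma_def)
      then have "(\<Sum>i\<in>{1..n} - J. scale_K scale ((-1) ^ card {j\<in>J. j < i} * x i)
            (gamma scale n (Suc s) t f (insert i J))) = 0"
        by (intro sum.neutral) (simp add: scale_K_def zero_fun_def)
      then show ?thesis using False Jn
        by (simp add: koszul_d_def gamma_def)
    next
      case cJ: True
      have G: "gamma scale n (Suc s) t f (insert i J) = 
          (\<lambda>L. if L \<inter> insert i J = {} then scale (wsign (insert i J) L) (f (insert i J \<union> L)) else 0)"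
        if i: "i \<in> {1..n} - J" for i
      proof -
        have c: "card (insert i J) = Suc s" using i finJ cJ by simp
        have "in_K n (card (insert i J) + t) f" using c assms(2) by simp
        then show ?thesis using c i Jn finJ
          by (simp add: gamma_def bcomp_eq[OF assms(1)])
      qed
      have R: "gamma scale n s t ?dF J = 
          (\<lambda>L. if L \<inter> J = {} then scale (wsign J L) (?dF (J \<union> L)) else 0)"
        using Jn cJ finJ dF by (simp add: gamma_def bcomp_eq[OF assms(1)])
      show ?thesis
      proof
        fix L
        have LHS: "koszul_d (scale_K scale) n x (gamma scale n (Suc s) t f) J L =
          (\<Sum>i\<in>{1..n} - J. scale ((-1) ^ card {j\<in>J. j < i} * x i)
             (if L \<inter> insert i J = {} then scale (wsign (insert i J) L) (f (insert i J \<union> L)) else 0))"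
          using Jn by (simp add: koszul_d_def sum_fun_apply scale_K_def G)
        show "koszul_d (scale_K scale) n x (gamma scale n (Suc s) t f) J L
           = gamma scale n s t ?dF J L"
        proof (cases "L \<inter> J = {}")
          case False
          then show ?thesis unfolding LHS R by auto
        next
          case dj: True
          show ?thesis
          proof (cases "L \<subseteq> {1..n}")
            case False
            have f0: "f (insert i J \<union> L) = 0" for i
              using False assms(2) unfolding in_K_def by blast
            have "?dF (J \<union> L) = 0" using False by (simp add: koszul_d_def)
            moreover have "(\<Sum>i\<in>{1..n} - J. scale ((-1) ^ card {j\<in>J. j < i} * x i)
             (if L \<inter> insert i J = {} then scale (wsign (insert i J) L) (f (insert i J \<union> L)) else 0)) = 0"
              by (rule sum.neutral) (simp only: f0 scale_zero_right if_cancel ball_simps refl simp_thms, blast)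
            ultimately show ?thesis unfolding LHS R using dj by simp
          next
            case Ln: True
            then have finL: "finite L" using finite_subset by blast
            have "(\<Sum>i\<in>{1..n} - J. scale ((-1) ^ card {j\<in>J. j < i} * x i)
             (if L \<inter> insert i J = {} then scale (wsign (insert i J) L) (f (insert i J \<union> L)) else 0))
              = (\<Sum>i\<in>{1..n} - (J \<union> L). scale ((-1) ^ card {j\<in>J. j < i} * x i)
             (if L \<inter> insert i J = {} then scale (wsign (insert i J) L) (f (insert i J \<union> L)) else 0))"
              by (rule sum.mono_neutral_right) auto
            also have "\<dots> = (\<Sum>i\<in>{1..n} - (J \<union> L). scale (wsign J L)
                 (scale ((-1) ^ card {k\<in>J \<union> L. k < i} * x i) (f (insert i (J \<union> L)))))"
            proof (rule sum.cong[OF refl])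
              fix i assume i: "i \<in> {1..n} - (J \<union> L)"
              have ws: "(wsign (insert i J) L :: 'r) = wsign J L * (-1) ^ card {k\<in>L. k < i}"
                using wsign_insert finJ finL i by blast
              have "{k\<in>J \<union> L. k < i} = {k\<in>J. k < i} \<union> {k\<in>L. k < i}" by auto
              then have cc: "card {k\<in>J \<union> L. k < i} = card {k\<in>J. k < i} + card {k\<in>L. k < i}"
                using finJ finL dj by (metis (no_types, lifting) card_Un_disjoint finite_subset
                    mem_Collect_eq subsetI disjoint_iff IntI empty_iff)
              have pw: "((-1::'r) ^ card {k\<in>J \<union> L. k < i}) = (-1) ^ card {k\<in>J. k < i} * (-1) ^ card {k\<in>L. k < i}"
                by (simp only: cc power_add)
              have "L \<inter> insert i J = {}" using i dj by auto
              moreover have "insert i J \<union> L = insert i (J \<union> L)" by auto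
              ultimately show "scale ((-1) ^ card {j\<in>J. j < i} * x i)
                 (if L \<inter> insert i J = {} then scale (wsign (insert i J) L) (f (insert i J \<union> L)) else 0)
                 = scale (wsign J L)
                 (scale ((-1) ^ card {k\<in>J \<union> L. k < i} * x i) (f (insert i (J \<union> L))))"
                unfolding ws pw by (simp add: mult_ac)
            qed
            also have "\<dots> = scale (wsign J L) (?dF (J \<union> L))"
              using Jn Ln by (simp add: koszul_d_def scale_sum_right)
            finally show ?thesis unfolding LHS R using dj by simp
          qed
        qed
      qed
    qed
  qed
qed

end
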